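(* Let $n\ge3$ and let $U$ be a unipotent subgroup of $G$, i.e. a $G$-conjugate of a closed subgroup of $N$. If $U\subset HM$ then $\dim U\le n-3$.
   Context: $G=\mathrm{SO}(1,n)$ is realized as the $g\in\mathrm{SL}_{n+1}(\mathbb{R})$ preserving $2x_0x_1+x_2^2+\dots+x_n^2$, i.e. $g\begin{pmatrix}J&0\\0&I_{n-1}\end{pmatrix}g^T=\begin{pmatrix}J&0\\0&I_{n-1}\end{pmatrix}$, $J=\begin{pmatrix}0&1\\1&0\end{pmatrix}$. $N$ is the abelian unipotent subgroup with Lie algebra $\mathfrak{n}=\{X(R)\}$, where $X(R)=\begin{pmatrix}0&b\\c&0\end{pmatrix}$ (blocks of size $2$ and $n-1$), $b=\begin{pmatrix}R\\0\end{pmatrix}$, $R\in M_{1\times(n-1)}(\mathbb{R})$, $c=-b^TJ$. $M=\{\mathrm{diag}(\epsilon I_2,m):\epsilon=\pm1,m\in\mathrm{SO}(n-1)\}$. Writing matrices in $3\times3$ block form with block sizes $2,2,n-3$ (coordinates $(x_0,x_1)$, $(x_2,x_3)$, $(x_4,\dots,x_n)$), $H\cong\mathrm{SO}(1,n-2)$ is the subgroup of $G$ acting trivially on the coordinates $x_2,x_3$ (so its Lie algebra has the pattern $\begin{pmatrix}*&0&*\\0&0&0\\ *&0&*\end{pmatrix}$). *)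

theory Defs
  imports "HOL-Analysis.Analysis" "Jordan_Normal_Form.Determinant"
begin

text \<open>Matrices are (n+1) x (n+1) real matrices (Jordan_Normal_Form type real mat),
  rows/columns indexed 0..n, corresponding to the coordinates x_0, ..., x_n.\<close>

definition Qmat :: "nat \<Rightarrow> real mat" where
  "Qmat n = mat (n+1) (n+1) (\<lambda>(i,j).
      if (i = 0 \<and> j = 1) \<or> (i = 1 \<and> j = 0) then 1
      else if i = j \<and> 2 \<le> i then 1 else 0)"

definition Ggrp :: "nat \<Rightarrow> real mat set" where
  "Ggrp n = {g \<in> carrier_mat (n+1) (n+1). det g = 1 \<and> g * Qmat n * transpose_mat g = Qmat n}"

definition mexp :: "real mat \<Rightarrow> real mat" where
  "mexp A = mat (dim_row A) (dim_col A) (\<lambda>(i,j). \<Sum>k. (A ^\<^sub>m k) $$ (i,j) / fact k)"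

text \<open>X(R): R is the row vector (R_2, ..., R_n) (only the entries of R at indices 2..n are used);
  b = (R;0) sits in rows 0,1 / columns 2..n, and c = - b^T J sits in rows 2..n / columns 0,1.\<close>
definition Xmat :: "nat \<Rightarrow> (nat \<Rightarrow> real) \<Rightarrow> real mat" where
  "Xmat n R = mat (n+1) (n+1) (\<lambda>(i,j).
      if i = 0 \<and> 2 \<le> j then R j
      else if 2 \<le> i \<and> j = 1 then - R i else 0)"

definition Ngrp :: "nat \<Rightarrow> real mat set" where
  "Ngrp n = {mexp (Xmat n R) | R. True}"

definition closed_subgroup :: "nat \<Rightarrow> real mat set \<Rightarrow> bool" where
  "closed_subgroup n V \<longleftrightarrow>
     V \<subseteq> carrier_mat (n+1) (n+1) \<and> 1\<^sub>m (n+1) \<in> V \<and>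
     (\<forall>a\<in>V. \<forall>b\<in>V. a * b \<in> V) \<and>
     (\<forall>a\<in>V. \<exists>b\<in>V. a * b = 1\<^sub>m (n+1) \<and> b * a = 1\<^sub>m (n+1)) \<and>
     (\<forall>f A. (\<forall>k. f k \<in> V) \<longrightarrow> A \<in> carrier_mat (n+1) (n+1) \<longrightarrow>
        (\<forall>i<n+1. \<forall>j<n+1. (\<lambda>k. f k $$ (i,j)) \<longlonglongrightarrow> A $$ (i,j)) \<longrightarrow> A \<in> V)"

definition unipotent :: "nat \<Rightarrow> real mat set \<Rightarrow> bool" where
  "unipotent n U \<longleftrightarrow> (\<exists>g h V. g \<in> Ggrp n \<and> h \<in> carrier_mat (n+1) (n+1) \<and>
      g * h = 1\<^sub>m (n+1) \<and> h * g = 1\<^sub>m (n+1) \<and>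
      closed_subgroup n V \<and> V \<subseteq> Ngrp n \<and> U = {g * v * h | v. v \<in> V})"

definition Mgrp :: "nat \<Rightarrow> real mat set" where
  "Mgrp n = {four_block_mat (\<epsilon> \<cdot>\<^sub>m 1\<^sub>m 2) (0\<^sub>m 2 (n-1)) (0\<^sub>m (n-1) 2) m | \<epsilon> m.
      (\<epsilon> = 1 \<or> \<epsilon> = -1) \<and> m \<in> carrier_mat (n-1) (n-1) \<and>
      m * transpose_mat m = 1\<^sub>m (n-1) \<and> det m = 1}"

definition Hgrp :: "nat \<Rightarrow> real mat set" where
  "Hgrp n = {g \<in> Ggrp n. \<forall>i<n+1. \<forall>j<n+1. (i \<in> {2,3} \<or> j \<in> {2,3}) \<longrightarrow>
       g $$ (i,j) = (if i = j then 1 else 0)}"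

definition HM :: "nat \<Rightarrow> real mat set" where
  "HM n = {h * m | h m. h \<in> Hgrp n \<and> m \<in> Mgrp n}"

definition lie_alg :: "nat \<Rightarrow> real mat set \<Rightarrow> real mat set" where
  "lie_alg n U = {X \<in> carrier_mat (n+1) (n+1). \<forall>t::real. mexp (t \<cdot>\<^sub>m X) \<in> U}"

definition mat_lin_indep :: "nat \<Rightarrow> real mat set \<Rightarrow> bool" where
  "mat_lin_indep n S \<longleftrightarrow> (\<forall>c :: real mat \<Rightarrow> real.
     (\<forall>i<n+1. \<forall>j<n+1. (\<Sum>X\<in>S. c X * X $$ (i,j)) = 0) \<longrightarrow> (\<forall>X\<in>S. c X = 0))"

definition mat_dim :: "nat \<Rightarrow> real mat set \<Rightarrow> nat" where
  "mat_dim n L = Sup {card S | S. finite S \<and> S \<subseteq> L \<and> mat_lin_indep n S}"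

definition group_dim :: "nat \<Rightarrow> real mat set \<Rightarrow> nat" where
  "group_dim n U = mat_dim n (lie_alg n U)"

end

theory Submission
  imports Defs "HOL-Library.Function_Algebras"
begin


lemma mult_entry:
  assumes "A \<in> carrier_mat m k" "B \<in> carrier_mat k p" "i < m" "j < p"
  shows "(A * B) $$ (i,j) = (\<Sum>l<k. A $$ (i,l) * B $$ (l,j))"
  using assms by (auto simp: scalar_prod_def lessThan_atLeast0 intro!: sum.cong)

lemma pow_smult:
  assumes "X \<in> carrier_mat m m"
  shows "(t \<cdot>\<^sub>m X) ^\<^sub>m k = (t::real)^k \<cdot>\<^sub>m (X ^\<^sub>m k)"
proof (induction k)
  case 0
  then show ?case using assms by (auto intro!: eq_matI)
next
  case (Suc k)
  have "(t \<cdot>\<^sub>m X) ^\<^sub>m Suc k = (t^k \<cdot>\<^sub>m (X ^\<^sub>m k)) * (t \<cdot>\<^sub>m X)" using Suc by simp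
  also have "\<dots> = t^Suc k \<cdot>\<^sub>m (X ^\<^sub>m Suc k)"
    using assms by (auto intro!: eq_matI simp: mult_entry[of _ m m _ m] sum_distrib_left mult_ac)
  finally show ?case .
qed

lemma pow_zero3:
  assumes "X \<in> carrier_mat m m" "X * X * X = 0\<^sub>m m m"
  shows "X ^\<^sub>m (k+3) = 0\<^sub>m m m"
proof (induction k)
  case 0
  have "X ^\<^sub>m 3 = 1\<^sub>m m * X * X * X" using assms by (simp add: numeral_3_eq_3)
  then show ?case using assms by simp
next
  case (Suc k)
  have "X ^\<^sub>m (Suc k + 3) = X ^\<^sub>m (k+3) * X" by (simp del: pow_mat.simps add: pow_mat.simps(2)[symmetric])
  then show ?case using Suc assms by simp
qed

lemma mexp_nil:
  assumes "X \<in> carrier_mat m m" "X * X * X = 0\<^sub>m m m" "i < m" "j < m"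
  shows "mexp X $$ (i,j) = (1\<^sub>m m) $$ (i,j) + X $$ (i,j) + (X * X) $$ (i,j) / 2"
proof -
  have z: "(X ^\<^sub>m k) $$ (i,j) / fact k = 0" if "k \<notin> {0,1,2}" for k
  proof -
    have "k \<ge> 3" using that by auto
    then obtain l where "k = l + 3" by (metis add.commute le_add_diff_inverse)
    then show ?thesis using pow_zero3[OF assms(1,2), of l] assms by simp
  qed
  have "(\<Sum>k. (X ^\<^sub>m k) $$ (i,j) / fact k) = (\<Sum>k\<in>{0,1,2}. (X ^\<^sub>m k) $$ (i,j) / fact k)"
    by (rule suminf_finite) (use z in auto)
  also have "\<dots> = (1\<^sub>m m) $$ (i,j) + X $$ (i,j) + (X * X) $$ (i,j) / 2"
    using assms by (simp add: numeral_2_eq_2)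
  finally show ?thesis using assms unfolding mexp_def by simp
qed

lemma pow_entry_bound:
  assumes X: "X \<in> carrier_mat m m" and ab: "a < m" "b < m"
  shows "\<bar>(X ^\<^sub>m k) $$ (a,b)\<bar> \<le> (real m * (\<Sum>i<m. \<Sum>j<m. \<bar>X $$ (i,j)\<bar>)) ^ k"
  using ab
proof (induction k arbitrary: b)
  case 0
  then show ?case using X ab by auto
next
  case (Suc k)
  define M where "M = (\<Sum>i<m. \<Sum>j<m. \<bar>X $$ (i,j)\<bar>)"
  have Mb: "\<bar>X $$ (l,b)\<bar> \<le> M" if "l < m" for l
  proof -
    have "\<bar>X $$ (l,b)\<bar> \<le> (\<Sum>j<m. \<bar>X $$ (l,j)\<bar>)"
      using Suc.prems by (intro member_le_sum) auto
    also have "\<dots> \<le> M" unfolding M_def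
      using that by (intro member_le_sum[where f = "\<lambda>i. \<Sum>j<m. \<bar>X $$ (i,j)\<bar>"]) (auto intro: sum_nonneg)
    finally show ?thesis .
  qed
  have M0: "M \<ge> 0" unfolding M_def by (auto intro: sum_nonneg)
  have "(X ^\<^sub>m Suc k) $$ (a,b) = (\<Sum>l<m. (X ^\<^sub>m k) $$ (a,l) * X $$ (l,b))"
    using mult_entry[of "X ^\<^sub>m k" m m X m a b] X Suc.prems ab by (simp del: index_mult_mat)
  also have "\<bar>\<dots>\<bar> \<le> (\<Sum>l<m. \<bar>(X ^\<^sub>m k) $$ (a,l) * X $$ (l,b)\<bar>)" by (rule sum_abs)
  also have "\<dots> \<le> (\<Sum>l<m. (real m * M) ^ k * M)"
  proof (rule sum_mono)
    fix l assume "l \<in> {..<m}"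
    then have l: "l < m" by auto
    have "\<bar>(X ^\<^sub>m k) $$ (a,l) * X $$ (l,b)\<bar> = \<bar>(X ^\<^sub>m k) $$ (a,l)\<bar> * \<bar>X $$ (l,b)\<bar>" by (simp add: abs_mult)
    also have "\<dots> \<le> (real m * M) ^ k * M"
      using Suc.IH[OF ab(1) l] Mb[OF l] M0 unfolding M_def by (intro mult_mono) auto
    finally show "\<bar>(X ^\<^sub>m k) $$ (a,l) * X $$ (l,b)\<bar> \<le> (real m * M) ^ k * M" .
  qed
  also have "\<dots> = (real m * M) ^ Suc k" by (simp add: mult_ac)
  finally show ?case unfolding M_def .
qed

lemma mexp_deriv:
  assumes X: "X \<in> carrier_mat m m" and ab: "a < m" "b < m"
  shows "((\<lambda>t. mexp (t \<cdot>\<^sub>m X) $$ (a,b)) has_real_derivative X $$ (a,b)) (at 0)"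
proof -
  define c where "c k = (X ^\<^sub>m k) $$ (a,b) / fact k" for k
  define B where "B = real m * (\<Sum>i<m. \<Sum>j<m. \<bar>X $$ (i,j)\<bar>)"
  have eq: "mexp (t \<cdot>\<^sub>m X) $$ (a,b) = (\<Sum>k. c k * t ^ k)" for t
    using X ab unfolding mexp_def c_def by (simp add: pow_smult[OF X] mult_ac)
  have sm: "summable (\<lambda>k. c k * y ^ k)" for y :: real
  proof (rule summable_comparison_test)
    show "summable (\<lambda>k. inverse (fact k) * (B * \<bar>y\<bar>) ^ k)" by (rule summable_exp)
    show "\<exists>N. \<forall>k\<ge>N. norm (c k * y ^ k) \<le> inverse (fact k) * (B * \<bar>y\<bar>) ^ k"
    proof (intro exI allI impI)
      fix k :: nat
      have "norm (c k * y ^ k) = \<bar>(X ^\<^sub>m k) $$ (a,b)\<bar> * \<bar>y\<bar> ^ k * inverse (fact k)"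
        unfolding c_def by (simp add: abs_mult power_abs divide_inverse)
      also have "\<dots> \<le> B ^ k * \<bar>y\<bar> ^ k * inverse (fact k)"
        using pow_entry_bound[OF X ab, of k] unfolding B_def
        by (intro mult_right_mono) auto
      finally show "norm (c k * y ^ k) \<le> inverse (fact k) * (B * \<bar>y\<bar>) ^ k"
        by (simp add: power_mult_distrib mult_ac)
    qed
  qed
  have "((\<lambda>t. \<Sum>k. c k * t ^ k) has_real_derivative (\<Sum>k. diffs c k * 0 ^ k)) (at 0)"
    by (rule termdiffs_strong_converges_everywhere) (rule sm)
  moreover have "(\<Sum>k. diffs c k * 0 ^ k) = X $$ (a,b)"
  proof -
    have "(\<Sum>k. diffs c k * 0 ^ k) = diffs c 0" by (rule powser_zero)
    also have "\<dots> = c 1" by (simp add: diffs_def)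
    also have "c 1 = X $$ (a,b)" using X ab by (simp add: c_def)
    finally show ?thesis .
  qed
  ultimately show ?thesis by (simp add: eq)
qed

lemma mexp_carrier: "A \<in> carrier_mat m m \<Longrightarrow> mexp A \<in> carrier_mat m m"
  unfolding mexp_def by auto

lemma mexp_zero:
  assumes X: "X \<in> carrier_mat m m" and ab: "a < m" "b < m"
  shows "mexp (0 \<cdot>\<^sub>m X) $$ (a,b) = (if a = b then 1 else 0)"
proof -
  have "mexp (0 \<cdot>\<^sub>m X) $$ (a,b) = (\<Sum>k. ((X ^\<^sub>m k) $$ (a,b) / fact k) * 0 ^ k)"
    using X ab unfolding mexp_def by (simp add: pow_smult[OF X] mult_ac)
  also have "\<dots> = (if a = b then 1 else 0)" using X ab by (subst powser_zero) simp
  finally show ?thesis .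
qed

lemma Xmat_carrier[simp]: "Xmat n R \<in> carrier_mat (n+1) (n+1)"
  unfolding Xmat_def by auto

lemma Xmat_carrier'[simp]: "Xmat n R \<in> carrier_mat (Suc n) (Suc n)"
  unfolding Xmat_def by auto

lemma Xmat_index: "i < n+1 \<Longrightarrow> j < n+1 \<Longrightarrow> Xmat n R $$ (i,j) =
      (if i = 0 \<and> 2 \<le> j then R j else if 2 \<le> i \<and> j = 1 then - R i else 0)"
  unfolding Xmat_def by simp

lemma Xmat_sq:
  assumes "i < n+1" "j < n+1"
  shows "(Xmat n R * Xmat n R) $$ (i,j) = (if i = 0 \<and> j = 1 then - (\<Sum>k\<in>{2..n}. (R k)^2) else 0)"
proof -
  have "(Xmat n R * Xmat n R) $$ (i,j) = (\<Sum>l<n+1. Xmat n R $$ (i,l) * Xmat n R $$ (l,j))"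
    by (rule mult_entry[OF Xmat_carrier Xmat_carrier assms])
  also have "\<dots> = (\<Sum>l<n+1. (if i = 0 \<and> j = 1 \<and> 2 \<le> l then - (R l ^ 2) else 0))"
  proof (rule sum.cong[OF refl])
    fix l assume "l \<in> {..<n+1}"
    then have l: "l < n+1" by simp
    show "Xmat n R $$ (i,l) * Xmat n R $$ (l,j) = (if i = 0 \<and> j = 1 \<and> 2 \<le> l then - (R l ^ 2) else 0)"
      unfolding Xmat_index[OF assms(1) l] Xmat_index[OF l assms(2)]
      by (cases "i = 0"; cases "j = 1"; cases "2 \<le> l"; cases "l = 1"; simp add: power2_eq_square)
  qed
  also have "\<dots> = (\<Sum>l\<in>{l\<in>{..<n+1}. i = 0 \<and> j = 1 \<and> 2 \<le> l}. - (R l ^ 2))"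
    by (rule sum.inter_filter[symmetric]) auto
  also have "\<dots> = (if i = 0 \<and> j = 1 then - (\<Sum>k\<in>{2..n}. (R k)^2) else 0)"
  proof (cases "i = 0 \<and> j = 1")
    case True
    then have "{l\<in>{..<n+1}. i = 0 \<and> j = 1 \<and> 2 \<le> l} = {2..n}" by auto
    then show ?thesis using True by (simp add: sum_negf)
  qed auto
  finally show ?thesis .
qed

lemma Xmat_dim[simp]: "dim_row (Xmat n R) = Suc n" "dim_col (Xmat n R) = Suc n"
  unfolding Xmat_def by simp_all



lemma Xmat_cube: "Xmat n R * Xmat n R * Xmat n R = 0\<^sub>m (n+1) (n+1)"
proof (rule eq_matI)
  fix i j assume ij: "i < dim_row (0\<^sub>m (n+1) (n+1) :: real mat)" "j < dim_col (0\<^sub>m (n+1) (n+1) :: real mat)"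
  then have i: "i < n+1" and j: "j < n+1" by auto
  have "(Xmat n R * Xmat n R * Xmat n R) $$ (i,j) = (\<Sum>l<n+1. (Xmat n R * Xmat n R) $$ (i,l) * Xmat n R $$ (l,j))"
    by (rule mult_entry[OF mult_carrier_mat[OF Xmat_carrier Xmat_carrier] Xmat_carrier i j])
  also have "\<dots> = 0"
  proof (rule sum.neutral, rule ballI)
    fix l assume "l \<in> {..<n+1}"
    then have l: "l < n+1" by auto
    show "(Xmat n R * Xmat n R) $$ (i,l) * Xmat n R $$ (l,j) = 0"
    proof (cases "l = 1")
      case True
      then have "Xmat n R $$ (l,j) = 0" using l j by (simp only: Xmat_index) simp
      then show ?thesis by simp
    next
      case False
      then have "(Xmat n R * Xmat n R) $$ (i,l) = 0" using Xmat_sq[OF i l, of R] by simp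
      then show ?thesis by simp
    qed
  qed
  finally show "(Xmat n R * Xmat n R * Xmat n R) $$ (i,j) = 0\<^sub>m (n+1) (n+1) $$ (i,j)" using i j by simp
qed simp_all

lemma mexp_Xmat:
  assumes i: "i < n+1" and j: "j < n+1"
  shows "mexp (Xmat n R) $$ (i,j) = (if i = j then 1 else 0)
     + (if i = 0 \<and> 2 \<le> j then R j else if 2 \<le> i \<and> j = 1 then - R i else 0)
     + (if i = 0 \<and> j = 1 then - (\<Sum>k\<in>{2..n}. (R k)^2) / 2 else 0)"
proof -
  have "mexp (Xmat n R) $$ (i,j) = (1\<^sub>m (n+1)) $$ (i,j) + Xmat n R $$ (i,j) + (Xmat n R * Xmat n R) $$ (i,j) / 2"
    by (rule mexp_nil[OF Xmat_carrier Xmat_cube i j])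
  also have "(1\<^sub>m (n+1)) $$ (i,j) = (if i = j then 1 else 0)" using i j by (rule index_one_mat)
  also have "Xmat n R $$ (i,j) = (if i = 0 \<and> 2 \<le> j then R j else if 2 \<le> i \<and> j = 1 then - R i else 0)"
    using i j by (rule Xmat_index)
  also have "(Xmat n R * Xmat n R) $$ (i,j) / 2 = (if i = 0 \<and> j = 1 then - (\<Sum>k\<in>{2..n}. (R k)^2) / 2 else 0)"
    using Xmat_sq[OF i j, of R] by simp
  finally show ?thesis .
qed

lemma triple_entry:
  assumes "h \<in> carrier_mat m m" "M \<in> carrier_mat m m" "g \<in> carrier_mat m m" "i < m" "j < m"
  shows "(h * M * g) $$ (i,j) = (\<Sum>b<m. (\<Sum>a<m. h $$ (i,a) * M $$ (a,b)) * g $$ (b,j))"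
proof -
  have "(h * M * g) $$ (i,j) = (\<Sum>b<m. (h * M) $$ (i,b) * g $$ (b,j))"
    using assms by (intro mult_entry[of _ m m]) auto
  also have "\<dots> = (\<Sum>b<m. (\<Sum>a<m. h $$ (i,a) * M $$ (a,b)) * g $$ (b,j))"
    using assms by (intro sum.cong refl, subst mult_entry[of _ m m]) auto
  finally show ?thesis .
qed

lemma conj_deriv:
  assumes X: "X \<in> carrier_mat m m" and h: "h \<in> carrier_mat m m" and g: "g \<in> carrier_mat m m"
    and ij: "i < m" "j < m"
  shows "((\<lambda>t. (h * mexp (t \<cdot>\<^sub>m X) * g) $$ (i,j)) has_real_derivative (h * X * g) $$ (i,j)) (at 0)"
proof -
  have c: "mexp (t \<cdot>\<^sub>m X) \<in> carrier_mat m m" for t using X by (intro mexp_carrier) auto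
  have "((\<lambda>t. (\<Sum>b<m. (\<Sum>a<m. h $$ (i,a) * mexp (t \<cdot>\<^sub>m X) $$ (a,b)) * g $$ (b,j)))
     has_real_derivative (\<Sum>b<m. (\<Sum>a<m. h $$ (i,a) * X $$ (a,b)) * g $$ (b,j))) (at 0)"
    by (intro DERIV_sum DERIV_cmult_right DERIV_cmult mexp_deriv[OF X]) auto
  then show ?thesis
    using triple_entry[OF h c g ij] triple_entry[OF h X g ij] by simp
qed

definition phi :: "nat \<Rightarrow> real mat \<Rightarrow> real mat \<Rightarrow> real mat \<Rightarrow> nat \<Rightarrow> real" where
  "phi n h g X = (\<lambda>j. if 2 \<le> j \<and> j \<le> n then (h * X * g) $$ (0,j) else 0)"

lemma conj_back:
  fixes g h X :: "real mat"
  assumes g: "g \<in> carrier_mat m m" and h: "h \<in> carrier_mat m m" and X: "X \<in> carrier_mat m m"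
    and gh: "g * h = 1\<^sub>m m"
  shows "g * (h * X * g) * h = X"
proof -
  have "g * (h * X * g) * h = (g * h) * X * (g * h)"
    using g h X by (simp add: assoc_mult_mat[of _ m m _ m _ m])
  also have "\<dots> = X" using gh left_mult_one_mat[OF X] right_mult_one_mat[OF X] by simp
  finally show ?thesis .
qed

lemma lie_structure:
  assumes g: "g \<in> carrier_mat (n+1) (n+1)" and h: "h \<in> carrier_mat (n+1) (n+1)"
    and hg: "h * g = 1\<^sub>m (n+1)"
    and X: "X \<in> carrier_mat (n+1) (n+1)"
    and inN: "\<And>t. \<exists>R. h * mexp (t \<cdot>\<^sub>m X) * g = mexp (Xmat n R)"
    and n1: "n \<ge> 1"
  shows "h * X * g = Xmat n (phi n h g X)"
proof -
  define P where "P t = h * mexp (t \<cdot>\<^sub>m X) * g" for t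
  define D where "D = h * X * g"
  obtain Rf where Rf: "\<And>t. P t = mexp (Xmat n (Rf t))"
    using inN unfolding P_def by metis
  have E: "P t $$ (i,j) = (if i = j then 1 else 0)
     + (if i = 0 \<and> 2 \<le> j then Rf t j else if 2 \<le> i \<and> j = 1 then - Rf t i else 0)
     + (if i = 0 \<and> j = 1 then - (\<Sum>k\<in>{2..n}. (Rf t k)^2) / 2 else 0)" if "i < n+1" "j < n+1" for t i j
    unfolding Rf by (rule mexp_Xmat[OF that])
  have d: "((\<lambda>t. P t $$ (i,j)) has_real_derivative D $$ (i,j)) (at 0)" if "i < n+1" "j < n+1" for i j
    unfolding P_def D_def by (rule conj_deriv[OF X h g that])
  have mz: "mexp (0 \<cdot>\<^sub>m X) = 1\<^sub>m (n+1)"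
  proof (rule eq_matI)
    fix i j assume "i < dim_row (1\<^sub>m (n+1) :: real mat)" "j < dim_col (1\<^sub>m (n+1) :: real mat)"
    then show "mexp (0 \<cdot>\<^sub>m X) $$ (i,j) = 1\<^sub>m (n+1) $$ (i,j)" using mexp_zero[OF X] by simp
  qed (use X in \<open>simp_all add: mexp_def\<close>)
  have P0: "P 0 = 1\<^sub>m (n+1)" unfolding P_def mz using h hg by simp
  have D1: "D $$ (i,j) = 0" if ij: "i < n+1" "j < n+1" "\<not> (i = 0 \<and> 1 \<le> j)" "\<not> (2 \<le> i \<and> j = 1)" for i j
  proof -
    have "(\<lambda>t. P t $$ (i,j)) = (\<lambda>t. (if i = j then 1 else 0))"
      using ij by (auto simp: E)
    then have "((\<lambda>t. P t $$ (i,j)) has_real_derivative 0) (at 0)" by simp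
    then show ?thesis using d[OF ij(1,2)] DERIV_unique by blast
  qed
  have D2: "D $$ (i,1) = - D $$ (0,i)" if i: "2 \<le> i" "i < n+1" for i
  proof -
    have "(\<lambda>t. P t $$ (i,1)) = (\<lambda>t. (-1) * P t $$ (0,i))"
      using i by (auto simp: E)
    moreover have "((\<lambda>t. (-1) * P t $$ (0,i)) has_real_derivative (-1) * D $$ (0,i)) (at 0)"
      using i by (intro DERIV_cmult d) auto
    ultimately have "((\<lambda>t. P t $$ (i,1)) has_real_derivative (-1) * D $$ (0,i)) (at 0)" by simp
    from DERIV_unique[OF d[of i 1] this] i show ?thesis by simp
  qed
  have D3: "D $$ (0,1) = 0"
  proof -
    have "(\<lambda>t. P t $$ (0,1)) = (\<lambda>t. (-1/2) * (\<Sum>k\<in>{2..n}. (P t $$ (0,k))^2))"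
    proof
      fix t
      have "(\<Sum>k\<in>{2..n}. (P t $$ (0,k))^2) = (\<Sum>k\<in>{2..n}. (Rf t k)^2)"
        by (rule sum.cong) (auto simp: E)
      then show "P t $$ (0,1) = (-1/2) * (\<Sum>k\<in>{2..n}. (P t $$ (0,k))^2)" using E[of 0 1 t] n1 by simp
    qed
    moreover have "((\<lambda>t. (-1/2) * (\<Sum>k\<in>{2..n}. (P t $$ (0,k))^2)) has_real_derivative
       (-1/2) * (\<Sum>k\<in>{2..n}. of_nat 2 * (D $$ (0,k) * (P 0 $$ (0,k)) ^ (2 - Suc 0)))) (at 0)"
      by (intro DERIV_cmult DERIV_sum DERIV_power d) auto
    moreover have "(\<Sum>k\<in>{2..n}. of_nat 2 * (D $$ (0,k) * (P 0 $$ (0,k)) ^ (2 - Suc 0))) = 0"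
      by (rule sum.neutral) (auto simp: P0)
    ultimately have "((\<lambda>t. P t $$ (0,1)) has_real_derivative 0) (at 0)" by simp
    from DERIV_unique[OF d[of 0 1] this] n1 show ?thesis by simp
  qed
  show ?thesis unfolding D_def[symmetric]
  proof (rule eq_matI)
    fix i j assume "i < dim_row (Xmat n (phi n h g X))" "j < dim_col (Xmat n (phi n h g X))"
    then have i: "i < n+1" and j: "j < n+1" by auto
    show "D $$ (i,j) = Xmat n (phi n h g X) $$ (i,j)"
    proof (cases "i = 0 \<and> 2 \<le> j")
      case True
      then show ?thesis using j by (simp add: phi_def D_def Xmat_index i j)
    next
      case c1: False
      show ?thesis
      proof (cases "2 \<le> i \<and> j = 1")
        case True
        then show ?thesis using D2[of i] i by (simp add: phi_def D_def Xmat_index i j)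
      next
        case False
        show ?thesis
        proof (cases "i = 0 \<and> j = 1")
          case True
          then show ?thesis using D3 n1 by (simp add: Xmat_index i j)
        next
          case c3: False
          have "\<not> (i = 0 \<and> 1 \<le> j)" using c1 c3 by auto
          then have "D $$ (i,j) = 0" using D1[OF i j] False by blast
          then show ?thesis unfolding Xmat_index[OF i j] using c1 False by auto
        qed
      qed
    qed
  qed (use g h in \<open>simp_all add: D_def\<close>)
qed

lemma sum_split01:
  fixes n :: nat
  assumes "n \<ge> 1"
  shows "(\<Sum>b<n+1. f b) = f 0 + f 1 + (\<Sum>b\<in>{2..n}. (f b :: real))"
proof -
  have "{..<n+1} = {0,1} \<union> {2..n}" using assms by auto
  then have "(\<Sum>b<n+1. f b) = (\<Sum>b\<in>{0,1}. f b) + (\<Sum>b\<in>{2..n}. f b)"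
    by (simp add: sum.union_disjoint)
  then show ?thesis by simp
qed

lemma HM_row:
  assumes n: "n \<ge> 3" and M: "M \<in> HM n" and i: "i \<in> {2,3}"
  shows "(\<Sum>j<n+1. (M $$ (i,j))^2) = 1"
proof -
  obtain hh mm where M: "M = hh * mm" and hh: "hh \<in> Hgrp n" and mm: "mm \<in> Mgrp n"
    using M unfolding HM_def by auto
  obtain e m' where mm_def: "mm = four_block_mat (e \<cdot>\<^sub>m 1\<^sub>m 2) (0\<^sub>m 2 (n-1)) (0\<^sub>m (n-1) 2) m'"
    and m'c: "m' \<in> carrier_mat (n-1) (n-1)" and orth: "m' * transpose_mat m' = 1\<^sub>m (n-1)"
    using mm unfolding Mgrp_def by auto
  have hhc: "hh \<in> carrier_mat (n+1) (n+1)" using hh unfolding Hgrp_def Ggrp_def by auto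
  have H: "\<forall>i<n+1. \<forall>j<n+1. (i \<in> {2,3} \<or> j \<in> {2,3}) \<longrightarrow> hh $$ (i,j) = (if i = j then 1 else 0)"
    using hh unfolding Hgrp_def by blast
  have il: "i < n+1" using i n by auto
  have hhrow: "hh $$ (i,k) = (if i = k then 1 else 0)" if "k < n+1" for k
    using H[rule_format, OF il that] i by blast
  have dimmm: "2 + (n - 1) = n + 1" using n by simp
  have mmc: "mm \<in> carrier_mat (n+1) (n+1)"
    unfolding mm_def using m'c dimmm[symmetric] four_block_carrier_mat[of "e \<cdot>\<^sub>m 1\<^sub>m 2" 2 2 m' "n-1" "n-1"]
    by (metis dimmm one_carrier_mat smult_carrier_mat)
  have Mij: "M $$ (i,j) = mm $$ (i,j)" if j: "j < n+1" for j
  proof -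
    have "M $$ (i,j) = (\<Sum>k<n+1. hh $$ (i,k) * mm $$ (k,j))"
      unfolding M by (rule mult_entry[OF hhc mmc il j])
    also have "\<dots> = (\<Sum>k<n+1. (if k = i then mm $$ (i,j) else 0))"
      by (rule sum.cong) (auto simp: hhrow)
    also have "\<dots> = mm $$ (i,j)" using il by simp
    finally show ?thesis .
  qed
  have mmij: "mm $$ (i,j) = (if j < 2 then 0 else m' $$ (i-2, j-2))" if j: "j < n+1" for j
    unfolding mm_def using j il i m'c n by (auto simp: dimmm)
  have "(\<Sum>j<n+1. (M $$ (i,j))^2) = (\<Sum>j<n+1. (if j < 2 then 0 else m' $$ (i-2, j-2))^2)"
    by (rule sum.cong) (auto simp: Mij mmij)
  also have "\<dots> = (\<Sum>l<n-1. (m' $$ (i-2, l))^2)"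
  proof -
    have e: "n + 1 = Suc (Suc (n-1))" using n by simp
    show ?thesis unfolding e by (simp add: sum.lessThan_Suc_shift del: sum.lessThan_Suc)
  qed
  also have "\<dots> = (m' * transpose_mat m') $$ (i-2, i-2)"
    using m'c i n by (subst mult_entry[of _ "n-1" "n-1" _ "n-1"]) (auto simp: power2_eq_square)
  also have "\<dots> = 1"
  proof -
    have "i - 2 < n - 1" using i n by auto
    then show ?thesis unfolding orth by simp
  qed
  finally show ?thesis .
qed



lemma sq_expand:
  fixes d x y :: "nat \<Rightarrow> real"
  shows "(\<Sum>j<m. (d j + t * x j + s * y j)^2) =
     (\<Sum>j<m. (d j)^2) + 2 * t * (\<Sum>j<m. d j * x j) + t^2 * (\<Sum>j<m. (x j)^2)
     + 2 * s * (\<Sum>j<m. d j * y j) + 2 * t * s * (\<Sum>j<m. x j * y j) + s^2 * (\<Sum>j<m. (y j)^2)"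
proof -
  have "(\<Sum>j<m. (d j + t * x j + s * y j)^2) = (\<Sum>j<m. (d j)^2 + 2 * t * (d j * x j) + t^2 * (x j)^2
     + 2 * s * (d j * y j) + 2 * t * s * (x j * y j) + s^2 * (y j)^2)"
    by (rule sum.cong) (auto simp: power2_eq_square algebra_simps)
  then show ?thesis by (simp add: sum.distrib sum_distrib_left)
qed

lemma row_zero:
  fixes X :: "real mat"
  assumes X: "X \<in> carrier_mat m m" and cube: "X * X * X = 0\<^sub>m m m" and i: "i < m"
    and nrm: "\<And>t. (\<Sum>j<m. (mexp (t \<cdot>\<^sub>m X) $$ (i,j))^2) = 1"
    and j: "j < m"
  shows "X $$ (i,j) = 0"
proof -
  define x where "x j = X $$ (i,j)" for j
  define y where "y j = (X * X) $$ (i,j)" for j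
  define d where "d j = (if j = i then 1 else 0 :: real)" for j
  have tc: "(t \<cdot>\<^sub>m X) * (t \<cdot>\<^sub>m X) = t^2 \<cdot>\<^sub>m (X * X)" for t
  proof -
    have "(t \<cdot>\<^sub>m X) * (t \<cdot>\<^sub>m X) = t \<cdot>\<^sub>m (t \<cdot>\<^sub>m (X * X))"
      using X by (simp add: mult_smult_assoc_mat[of _ m m _ m] mult_smult_distrib[of _ m m _ m])
    also have "\<dots> = t^2 \<cdot>\<^sub>m (X * X)" by (rule eq_matI) (auto simp: power2_eq_square)
    finally show ?thesis .
  qed
  have tcc: "(t \<cdot>\<^sub>m X) * (t \<cdot>\<^sub>m X) * (t \<cdot>\<^sub>m X) = 0\<^sub>m m m" for t
  proof -
    have "(t \<cdot>\<^sub>m X) * (t \<cdot>\<^sub>m X) * (t \<cdot>\<^sub>m X) = (t^2 \<cdot>\<^sub>m (X * X)) * (t \<cdot>\<^sub>m X)" by (simp only: tc)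
    also have "\<dots> = t^2 \<cdot>\<^sub>m ((X * X) * (t \<cdot>\<^sub>m X))"
      using X by (intro mult_smult_assoc_mat[of _ m m _ m]) auto
    also have "(X * X) * (t \<cdot>\<^sub>m X) = t \<cdot>\<^sub>m (X * X * X)"
      using X by (intro mult_smult_distrib[of _ m m _ m]) auto
    finally show ?thesis using cube by simp
  qed
  have me: "mexp (t \<cdot>\<^sub>m X) $$ (i,j) = d j + t * x j + (t^2/2) * y j" if "j < m" for t j
  proof -
    have "mexp (t \<cdot>\<^sub>m X) $$ (i,j) = 1\<^sub>m m $$ (i,j) + (t \<cdot>\<^sub>m X) $$ (i,j) + ((t \<cdot>\<^sub>m X) * (t \<cdot>\<^sub>m X)) $$ (i,j) / 2"
      using X by (intro mexp_nil[OF _ tcc i that]) auto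
    also have "\<dots> = d j + t * x j + (t^2/2) * y j"
      unfolding tc using X i that by (simp add: d_def x_def y_def)
    finally show ?thesis .
  qed
  define A where "A = (\<Sum>j<m. (x j)^2) + y i"
  define B where "B = (\<Sum>j<m. (y j)^2)"
  define C where "C = (\<Sum>j<m. x j * y j)"
  have dd: "(\<Sum>j<m. (d j)^2) = 1"
  proof -
    have "(\<Sum>j<m. (d j)^2) = (\<Sum>j<m. (if j = i then 1 else 0))" by (rule sum.cong) (auto simp: d_def)
    then show ?thesis using i by simp
  qed
  have delta: "(\<Sum>j<m. d j * f j) = f i" for f :: "nat \<Rightarrow> real"
  proof -
    have "(\<Sum>j<m. d j * f j) = (\<Sum>j<m. (if j = i then f j else 0))" by (rule sum.cong) (auto simp: d_def)
    then show ?thesis using i by simp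
  qed
  have dx: "(\<Sum>j<m. d j * x j) = x i" by (rule delta)
  have dy: "(\<Sum>j<m. d j * y j) = y i" by (rule delta)
  have key: "2 * t * x i + t^2 * A + t^3 * C + t^4 * B / 4 = 0" for t
  proof -
    have "1 = (\<Sum>j<m. (d j + t * x j + (t^2/2) * y j)^2)"
      using nrm[of t] by (simp add: me)
    also have "\<dots> = 1 + 2 * t * x i + t^2 * A + t^3 * C + t^4 * B / 4"
      unfolding sq_expand dd dx dy A_def B_def C_def by (simp add: power2_eq_square algebra_simps power4_eq_xxxx power3_eq_cube)
    finally show ?thesis by simp
  qed
  have "A = 0 \<and> B = 0" using key[of 1] key[of "-1"] key[of 2] key[of "-2"] by simp
  then have B0: "B = 0" and A0: "A = 0" by auto
  have "\<forall>j\<in>{..<m}. (y j)^2 = 0" using B0 unfolding B_def by (subst sum_nonneg_eq_0_iff[symmetric]) auto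
  then have "y i = 0" using i by simp
  then have "(\<Sum>j<m. (x j)^2) = 0" using A0 A_def by simp
  then have "\<forall>j\<in>{..<m}. (x j)^2 = 0" by (subst sum_nonneg_eq_0_iff[symmetric]) auto
  then show ?thesis using j by (simp add: x_def)
qed

lemma gY_row:
  assumes g: "g \<in> carrier_mat (n+1) (n+1)" and h: "h \<in> carrier_mat (n+1) (n+1)"
    and hg: "h * g = 1\<^sub>m (n+1)" and XY: "X = g * Xmat n R * h" and i: "i < n+1"
    and rowz: "\<And>j. j < n+1 \<Longrightarrow> X $$ (i,j) = 0" and n1: "n \<ge> 1"
  shows "\<And>j. j \<in> {2..n} \<Longrightarrow> g $$ (i,0) * R j = 0"
    and "(\<Sum>k\<in>{2..n}. g $$ (i,k) * R k) = 0"
proof -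
  have Xc: "X \<in> carrier_mat (n+1) (n+1)" unfolding XY using g h by auto
  have Xg: "X * g = g * Xmat n R"
  proof -
    have "X * g = g * Xmat n R * (h * g)" unfolding XY
      by (rule assoc_mult_mat) (use g h in auto)
    also have "\<dots> = g * Xmat n R" unfolding hg using g by simp
    finally show ?thesis .
  qed
  have z: "(g * Xmat n R) $$ (i,j) = 0" if j: "j < n+1" for j
  proof -
    have "(X * g) $$ (i,j) = (\<Sum>k<n+1. X $$ (i,k) * g $$ (k,j))"
      by (rule mult_entry[OF Xc g i j])
    also have "\<dots> = 0" by (rule sum.neutral) (auto simp: rowz)
    finally show ?thesis unfolding Xg .
  qed
  have ge: "(g * Xmat n R) $$ (i,j) = g $$ (i,0) * Xmat n R $$ (0,j) + g $$ (i,1) * Xmat n R $$ (1,j)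
      + (\<Sum>k\<in>{2..n}. g $$ (i,k) * Xmat n R $$ (k,j))" if j: "j < n+1" for j
    using mult_entry[OF g Xmat_carrier i j] sum_split01[OF n1] by simp
  show "g $$ (i,0) * R j = 0" if j: "j \<in> {2..n}" for j
  proof -
    have jl: "j < n+1" using j by auto
    have "(\<Sum>k\<in>{2..n}. g $$ (i,k) * Xmat n R $$ (k,j)) = 0"
      by (rule sum.neutral) (use j in \<open>auto simp: Xmat_index\<close>)
    then show ?thesis using z[OF jl] ge[OF jl] j n1 by (simp add: Xmat_index)
  qed
  show "(\<Sum>k\<in>{2..n}. g $$ (i,k) * R k) = 0"
  proof -
    have jl: "1 < n+1" using n1 by auto
    have "(\<Sum>k\<in>{2..n}. g $$ (i,k) * Xmat n R $$ (k,1)) = - (\<Sum>k\<in>{2..n}. g $$ (i,k) * R k)"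
      by (simp add: sum_negf[symmetric], rule sum.cong) (auto simp: Xmat_index)
    then show ?thesis using z[OF jl] ge[OF jl] n1 by (simp add: Xmat_index)
  qed
qed

lemma Qmat_index: "a < n+1 \<Longrightarrow> b < n+1 \<Longrightarrow> Qmat n $$ (a,b) =
   (if (a = 0 \<and> b = 1) \<or> (a = 1 \<and> b = 0) then 1 else if a = b \<and> 2 \<le> a then 1 else 0)"
  unfolding Qmat_def by simp

lemma Qmat_carrier: "Qmat n \<in> carrier_mat (n+1) (n+1)"
  unfolding Qmat_def by simp

lemma G_rows:
  assumes g: "g \<in> Ggrp n" and n1: "n \<ge> 1" and i: "2 \<le> i" "i < n+1" and k: "k < n+1"
  shows "g $$ (i,1) * g $$ (k,0) + g $$ (i,0) * g $$ (k,1) + (\<Sum>b\<in>{2..n}. g $$ (i,b) * g $$ (k,b))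
     = (if i = k then 1 else 0)"
proof -
  have gc: "g \<in> carrier_mat (n+1) (n+1)" and eq: "g * Qmat n * transpose_mat g = Qmat n"
    using g unfolding Ggrp_def by auto
  have gQc: "g * Qmat n \<in> carrier_mat (n+1) (n+1)" using gc Qmat_carrier by auto
  have gTc: "transpose_mat g \<in> carrier_mat (n+1) (n+1)" using gc by auto
  have gQ: "(g * Qmat n) $$ (i,b) = (if b = 0 then g $$ (i,1) else if b = 1 then g $$ (i,0) else g $$ (i,b))"
    if b: "b < n+1" for b
  proof -
    have "(g * Qmat n) $$ (i,b) = g $$ (i,0) * Qmat n $$ (0,b) + g $$ (i,1) * Qmat n $$ (1,b)
      + (\<Sum>a\<in>{2..n}. g $$ (i,a) * Qmat n $$ (a,b))"
      using mult_entry[OF gc Qmat_carrier i(2) b] sum_split01[OF n1] by simp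
    also have "(\<Sum>a\<in>{2..n}. g $$ (i,a) * Qmat n $$ (a,b)) = (\<Sum>a\<in>{2..n}. (if a = b then g $$ (i,b) else 0))"
      by (rule sum.cong) (use b in \<open>auto simp: Qmat_index\<close>)
    also have "\<dots> = (if b \<in> {2..n} then g $$ (i,b) else 0)" by simp
    finally show ?thesis using b n1 by (auto simp: Qmat_index)
  qed
  have "(g * Qmat n * transpose_mat g) $$ (i,k) = (\<Sum>b<n+1. (g * Qmat n) $$ (i,b) * transpose_mat g $$ (b,k))"
    by (rule mult_entry[OF gQc gTc i(2) k])
  also have "\<dots> = (\<Sum>b<n+1. (g * Qmat n) $$ (i,b) * g $$ (k,b))"
    by (rule sum.cong) (use gc k in auto)
  also have "\<dots> = g $$ (i,1) * g $$ (k,0) + g $$ (i,0) * g $$ (k,1) + (\<Sum>b\<in>{2..n}. g $$ (i,b) * g $$ (k,b))"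
  proof -
    have "(\<Sum>b\<in>{2..n}. (g * Qmat n) $$ (i,b) * g $$ (k,b)) = (\<Sum>b\<in>{2..n}. g $$ (i,b) * g $$ (k,b))"
      by (rule sum.cong) (auto simp: gQ)
    moreover have "(\<Sum>b<n+1. (g * Qmat n) $$ (i,b) * g $$ (k,b)) = (g * Qmat n) $$ (i,0) * g $$ (k,0)
       + (g * Qmat n) $$ (i,1) * g $$ (k,1) + (\<Sum>b\<in>{2..n}. (g * Qmat n) $$ (i,b) * g $$ (k,b))"
      by (rule sum_split01[OF n1])
    moreover have "(g * Qmat n) $$ (i,0) = g $$ (i,1)" using gQ[of 0] by simp
    moreover have "(g * Qmat n) $$ (i,1) = g $$ (i,0)" using gQ[of 1] n1 by simp
    ultimately show ?thesis by simp
  qed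
  finally show ?thesis unfolding eq using i k by (simp add: Qmat_index)
qed



interpretation fvs: vector_space "(\<lambda>c (f::nat\<Rightarrow>real) i. c * f i)"
  by unfold_locales (auto simp: fun_eq_iff algebra_simps plus_fun_def)

lemma fsum_apply: "(\<Sum>v\<in>t. f v) (k::nat) = (\<Sum>v\<in>t. (f v k :: real))"
proof (cases "finite t")
  case True
  then show ?thesis by (induction t rule: finite_induct) (auto simp: plus_fun_def zero_fun_def)
next
  case False
  then show ?thesis by (simp add: zero_fun_def)
qed

lemma count_bound:
  fixes z2 z3 :: "nat \<Rightarrow> real" and phi :: "'a \<Rightarrow> nat \<Rightarrow> real"
  assumes n: "n \<ge> 3" and S: "finite S" and inj: "inj_on phi S"
    and supp: "\<And>X k. X \<in> S \<Longrightarrow> k \<notin> {2..n} \<Longrightarrow> phi X k = 0"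
    and zsupp: "\<And>k. k \<notin> {2..n} \<Longrightarrow> z2 k = 0 \<and> z3 k = 0"
    and o2: "\<And>X. X \<in> S \<Longrightarrow> (\<Sum>k\<in>{2..n}. phi X k * z2 k) = 0"
    and o3: "\<And>X. X \<in> S \<Longrightarrow> (\<Sum>k\<in>{2..n}. phi X k * z3 k) = 0"
    and n22: "(\<Sum>k\<in>{2..n}. z2 k * z2 k) = 1" and n33: "(\<Sum>k\<in>{2..n}. z3 k * z3 k) = 1"
    and n23: "(\<Sum>k\<in>{2..n}. z2 k * z3 k) = 0"
    and indep: "\<And>c. (\<forall>k. (\<Sum>X\<in>S. c X * phi X k) = 0) \<Longrightarrow> (\<forall>X\<in>S. c X = 0)"
  shows "card S \<le> n - 3"
proof -
  define ip where "ip f z = (\<Sum>k\<in>{2..n}. f k * z k)" for f z :: "nat \<Rightarrow> real"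
  define S' where "S' = phi ` S \<union> {z2, z3}"
  define T where "T = (\<lambda>j (i::nat). if i = j then 1 else (0::real)) ` {2..n}"
  have z23: "z2 \<noteq> z3" using n22 n23 by auto
  have z2n: "z2 \<notin> phi ` S" using o2 n22 by auto
  have z3n: "z3 \<notin> phi ` S" using o3 n33 by auto
  have ipz2: "ip v z2 = (if v = z2 then 1 else 0)" if "v \<in> S'" for v
    using that o2 n22 n23 z23 unfolding S'_def ip_def by (auto simp: mult.commute)
  have ipz3: "ip v z3 = (if v = z3 then 1 else 0)" if "v \<in> S'" for v
    using that o3 n33 n23 z23 unfolding S'_def ip_def by (auto simp: mult.commute)
  have cardT: "card T = n - 1"
  proof -
    have "inj_on (\<lambda>j (i::nat). if i = j then 1 else (0::real)) {2..n}"
      by (auto simp: inj_on_def fun_eq_iff)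
    then show ?thesis unfolding T_def using card_image by fastforce
  qed
  have spanT: "f \<in> fvs.span T" if "\<And>k. k \<notin> {2..n} \<Longrightarrow> f k = 0" for f
  proof -
    have "f = (\<Sum>j\<in>{2..n}. (\<lambda>i. f j * (if i = j then 1 else 0)))"
    proof
      fix k
      show "f k = (\<Sum>j\<in>{2..n}. (\<lambda>i. f j * (if i = j then 1 else (0::real)))) k"
      proof -
        have "(\<Sum>v\<in>{2..n}. f v * (if k = v then 1 else (0::real))) = (\<Sum>v\<in>{2..n}. if v = k then f v else 0)"
          by (rule sum.cong) auto
        then show ?thesis unfolding fsum_apply using that[of k] by (cases "k \<in> {2..n}") auto
      qed
    qed
    also have "\<dots> \<in> fvs.span T"
      by (intro fvs.span_sum fvs.span_scale fvs.span_base) (auto simp: T_def)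
    finally show ?thesis .
  qed
  have sub: "S' \<subseteq> fvs.span T"
    unfolding S'_def using supp zsupp by (auto intro!: spanT)
  have ind: "\<not> fvs.dependent S'"
  proof
    assume "fvs.dependent S'"
    then obtain t u where t: "finite t" "t \<subseteq> S'" and sm: "(\<Sum>v\<in>t. (\<lambda>i. u v * v i)) = 0"
      and nz: "\<exists>v\<in>t. u v \<noteq> 0"
      unfolding fvs.dependent_explicit by blast
    have pt: "(\<Sum>v\<in>t. u v * v k) = 0" for k
      using fun_cong[OF sm, of k] unfolding fsum_apply by (simp add: zero_fun_def)
    have ipsum: "(\<Sum>v\<in>t. u v * ip v z) = 0" for z
    proof -
      have "(\<Sum>v\<in>t. u v * ip v z) = (\<Sum>k\<in>{2..n}. (\<Sum>v\<in>t. u v * v k) * z k)"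
        unfolding ip_def by (simp add: sum_distrib_left sum_distrib_right sum.swap[of _ t] mult_ac)
      also have "\<dots> = 0" by (simp add: pt)
      finally show ?thesis .
    qed
    have u2: "u z2 = 0" if "z2 \<in> t"
    proof -
      have "(\<Sum>v\<in>t. u v * ip v z2) = (\<Sum>v\<in>t. if v = z2 then u v else 0)"
        by (rule sum.cong) (use t ipz2 in auto)
      then show ?thesis using ipsum[of z2] that t by simp
    qed
    have u3: "u z3 = 0" if "z3 \<in> t"
    proof -
      have "(\<Sum>v\<in>t. u v * ip v z3) = (\<Sum>v\<in>t. if v = z3 then u v else 0)"
        by (rule sum.cong) (use t ipz3 in auto)
      then show ?thesis using ipsum[of z3] that t by simp
    qed
    define c where "c X = (if phi X \<in> t then u (phi X) else 0)" for X
    have "\<forall>k. (\<Sum>X\<in>S. c X * phi X k) = 0"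
    proof
      fix k
      have "(\<Sum>X\<in>S. c X * phi X k) = (\<Sum>X\<in>{X\<in>S. phi X \<in> t}. u (phi X) * phi X k)"
      proof -
        have "(\<Sum>X\<in>S. c X * phi X k) = (\<Sum>X\<in>S. if phi X \<in> t then u (phi X) * phi X k else 0)"
          by (rule sum.cong) (auto simp: c_def)
        also have "\<dots> = (\<Sum>X\<in>{X\<in>S. phi X \<in> t}. u (phi X) * phi X k)"
          by (rule sum.inter_filter[symmetric]) (rule S)
        finally show ?thesis .
      qed
      also have "\<dots> = (\<Sum>v\<in>phi ` {X\<in>S. phi X \<in> t}. u v * v k)"
        by (rule sum.reindex[symmetric, unfolded comp_def]) (rule inj_on_subset[OF inj], auto)
      also have "phi ` {X\<in>S. phi X \<in> t} = t \<inter> phi ` S" by auto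
      also have "(\<Sum>v\<in>t \<inter> phi ` S. u v * v k) = (\<Sum>v\<in>t. u v * v k)"
      proof (rule sum.mono_neutral_left)
        show "\<forall>i\<in>t - t \<inter> phi ` S. u i * i k = 0"
          using t u2 u3 unfolding S'_def by auto
      qed (use t in auto)
      also have "\<dots> = 0" by (rule pt)
      finally show "(\<Sum>X\<in>S. c X * phi X k) = 0" .
    qed
    then have c0: "\<forall>X\<in>S. c X = 0" by (rule indep)
    obtain v where v: "v \<in> t" "u v \<noteq> 0" using nz by blast
    then have "v \<in> phi ` S" using u2 u3 t unfolding S'_def by auto
    then obtain X where "X \<in> S" "v = phi X" by auto
    then show False using c0 v unfolding c_def by auto
  qed
  have "card S' \<le> card T"
    using fvs.independent_span_bound[OF _ ind sub] unfolding T_def by auto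
  moreover have "card S' = card S + 2"
  proof -
    have "card S' = card (phi ` S) + card {z2, z3}"
      unfolding S'_def using S z2n z3n by (intro card_Un_disjoint) auto
    then show ?thesis using card_image[OF inj] z23 by simp
  qed
  ultimately show ?thesis using cardT n by linarith
qed



lemma conj_mult:
  fixes g h A B :: "real mat"
  assumes g: "g \<in> carrier_mat m m" and h: "h \<in> carrier_mat m m" and A: "A \<in> carrier_mat m m"
    and B: "B \<in> carrier_mat m m" and hg: "h * g = 1\<^sub>m m"
  shows "(g * A * h) * (g * B * h) = g * (A * B) * h"
proof -
  have "(g * A * h) * (g * B * h) = g * A * ((h * g) * B * h)"
    using g h A B by (simp add: assoc_mult_mat[of _ m m _ m _ m])
  also have "\<dots> = g * (A * B) * h"
    unfolding hg using g h A B by (simp add: assoc_mult_mat[of _ m m _ m _ m])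
  finally show ?thesis .
qed

theorem proposition6:
  fixes n :: nat and U :: "real mat set"
  assumes "n \<ge> 3"
    and "unipotent n U"
    and "U \<subseteq> HM n"
  shows "group_dim n U \<le> n - 3"
proof -
  have n3: "n \<ge> 3" and n1: "n \<ge> 1" using assms(1) by auto
  obtain g h V where g: "g \<in> Ggrp n" and h: "h \<in> carrier_mat (n+1) (n+1)"
    and gh: "g * h = 1\<^sub>m (n+1)" and hg: "h * g = 1\<^sub>m (n+1)"
    and VN: "V \<subseteq> Ngrp n" and Ueq: "U = {g * v * h | v. v \<in> V}"
    using assms(2) unfolding unipotent_def by blast
  have gc: "g \<in> carrier_mat (n+1) (n+1)" using g unfolding Ggrp_def by auto
  define L where "L = lie_alg n U"
  define ph where "ph X = phi n h g X" for X
  have Lc: "X \<in> carrier_mat (n+1) (n+1)" if "X \<in> L" for X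
    using that unfolding L_def lie_alg_def by auto
  have LU: "mexp (t \<cdot>\<^sub>m X) \<in> U" if "X \<in> L" for X t
    using that unfolding L_def lie_alg_def by auto
  have struct: "X = g * Xmat n (ph X) * h" if X: "X \<in> L" for X
  proof -
    have inN: "\<exists>R. h * mexp (t \<cdot>\<^sub>m X) * g = mexp (Xmat n R)" for t
    proof -
      obtain v where v: "v \<in> V" and ev: "mexp (t \<cdot>\<^sub>m X) = g * v * h" using LU[OF X, of t] Ueq by auto
      obtain R where R: "v = mexp (Xmat n R)" using VN v unfolding Ngrp_def by auto
      have vc: "v \<in> carrier_mat (n+1) (n+1)" unfolding R by (rule mexp_carrier) simp
      have "h * mexp (t \<cdot>\<^sub>m X) * g = v" unfolding ev by (rule conj_back[OF h gc vc hg])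
      then show ?thesis unfolding R by blast
    qed
    have "h * X * g = Xmat n (ph X)" unfolding ph_def
      by (rule lie_structure[OF gc h hg Lc[OF X] inN n1])
    then show ?thesis using conj_back[OF gc h Lc[OF X] gh] by simp
  qed
  have rows: "X $$ (i,j) = 0" if X: "X \<in> L" and i: "i \<in> {2,3}" and j: "j < n+1" for X i j
  proof -
    define Y where "Y = Xmat n (ph X)"
    have Yc: "Y \<in> carrier_mat (n+1) (n+1)" unfolding Y_def by simp
    have sX: "X = g * Y * h" unfolding Y_def by (rule struct[OF X])
    have "X * X * X = g * (Y * Y * Y) * h"
    proof -
      have "X * X = g * (Y * Y) * h"
        unfolding sX by (rule conj_mult[OF gc h Yc Yc hg])
      then have "X * X * X = (g * (Y * Y) * h) * (g * Y * h)"
        by (simp add: sX)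
      also have "\<dots> = g * (Y * Y * Y) * h"
        by (rule conj_mult[OF gc h mult_carrier_mat[OF Yc Yc] Yc hg])
      finally show ?thesis .
    qed
    also have "\<dots> = 0\<^sub>m (n+1) (n+1)" unfolding Y_def Xmat_cube using gc h by simp
    finally have cube: "X * X * X = 0\<^sub>m (n+1) (n+1)" .
    have il: "i < n+1" using i n3 by auto
    have nrm: "(\<Sum>j<n+1. (mexp (t \<cdot>\<^sub>m X) $$ (i,j))^2) = 1" for t
      using HM_row[OF n3 _ i] LU[OF X, of t] assms(3) by auto
    show ?thesis by (rule row_zero[OF Lc[OF X] cube il nrm j])
  qed
  have gr: "(\<forall>j\<in>{2..n}. g $$ (i,0) * ph X j = 0) \<and> (\<Sum>k\<in>{2..n}. g $$ (i,k) * ph X k) = 0"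
    if X: "X \<in> L" and i: "i \<in> {2,3}" for X i
  proof -
    have il: "i < n+1" using i n3 by auto
    show ?thesis using gY_row[OF gc h hg struct[OF X] il rows[OF X i] n1] by blast
  qed
  have phsupp: "ph X k = 0" if "k \<notin> {2..n}" for X k
    using that unfolding ph_def phi_def by auto
  have bound: "card S \<le> n - 3" if S: "finite S" "S \<subseteq> L" "mat_lin_indep n S" for S
  proof (cases "g $$ (2,0) = 0 \<and> g $$ (3,0) = 0")
    case False
    then obtain i where i: "i \<in> {2,3}" and gi: "g $$ (i,0) \<noteq> 0" by auto
    have zero: "X $$ (a,b) = 0" if X: "X \<in> S" and ab: "a < n+1" "b < n+1" for X a b
    proof -
      have XL: "X \<in> L" using X S by auto
      have "ph X = (\<lambda>_. 0)"
      proof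
        fix k show "ph X k = 0"
        proof (cases "k \<in> {2..n}")
          case True
          then show ?thesis using gr[OF XL i] gi by auto
        qed (rule phsupp)
      qed
      then have "X = g * Xmat n (\<lambda>_. 0) * h" using struct[OF XL] by metis
      also have "Xmat n (\<lambda>_. 0) = 0\<^sub>m (n+1) (n+1)" unfolding Xmat_def by (rule eq_matI) auto
      finally show ?thesis using gc h ab by simp
    qed
    have "S = {}"
    proof (rule ccontr)
      assume "S \<noteq> {}"
      then obtain X where X: "X \<in> S" by auto
      have "\<forall>i<n+1. \<forall>j<n+1. (\<Sum>Y\<in>S. (\<lambda>_. 1::real) Y * Y $$ (i,j)) = 0"
      proof (intro allI impI)
        fix i j assume "i < n+1" "j < n+1"
        then show "(\<Sum>Y\<in>S. (\<lambda>_. 1::real) Y * Y $$ (i,j)) = 0"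
          by (intro sum.neutral ballI) (simp add: zero)
      qed
      then have "\<forall>Y\<in>S. (1::real) = 0"
        by (rule mp[OF spec[OF S(3)[unfolded mat_lin_indep_def], of "\<lambda>_. 1"]])
      then show False using X by simp
    qed
    then show ?thesis by simp
  next
    case True
    define z2 where "z2 k = (if k \<in> {2..n} then g $$ (2,k) else 0)" for k
    define z3 where "z3 k = (if k \<in> {2..n} then g $$ (3,k) else 0)" for k
    have G: "(\<Sum>b\<in>{2..n}. g $$ (i,b) * g $$ (k,b)) = (if i = k then 1 else 0)"
      if "i \<in> {2,3}" "k \<in> {2,3}" for i k
      using G_rows[OF g n1, of i k] that True n3 by auto
    have zs: "(\<Sum>k\<in>{2..n}. f k * z k) = (\<Sum>k\<in>{2..n}. f k * g $$ (i,k))"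
      if "z = (\<lambda>k. if k \<in> {2..n} then g $$ (i,k) else 0)" for f z i
      by (rule sum.cong) (auto simp: that)
    have inj: "inj_on ph S"
    proof
      fix X Y assume "X \<in> S" "Y \<in> S" "ph X = ph Y"
      then show "X = Y" using struct[of X] struct[of Y] S by (metis subsetD)
    qed
    have indep: "\<forall>X\<in>S. c X = 0" if c: "\<forall>k. (\<Sum>X\<in>S. c X * ph X k) = 0" for c
    proof -
      have Ysum: "(\<Sum>X\<in>S. c X * Xmat n (ph X) $$ (a,b)) = 0" if ab: "a < n+1" "b < n+1" for a b
      proof -
        show ?thesis
        proof (cases "a = 0 \<and> 2 \<le> b")
          case True
          have "(\<Sum>X\<in>S. c X * Xmat n (ph X) $$ (a,b)) = (\<Sum>X\<in>S. c X * ph X b)"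
            by (rule sum.cong) (use True ab in \<open>auto simp: Xmat_index\<close>)
          then show ?thesis using c by simp
        next
          case c1: False
          show ?thesis
          proof (cases "2 \<le> a \<and> b = 1")
            case True
            have "(\<Sum>X\<in>S. c X * Xmat n (ph X) $$ (a,b)) = (\<Sum>X\<in>S. - (c X * ph X a))"
              by (rule sum.cong) (use True ab in \<open>auto simp: Xmat_index\<close>)
            also have "\<dots> = - (\<Sum>X\<in>S. c X * ph X a)" by (rule sum_negf)
            finally show ?thesis using c by simp
          next
            case False
            have "(\<Sum>X\<in>S. c X * Xmat n (ph X) $$ (a,b)) = (\<Sum>X\<in>S. 0)"
              by (rule sum.cong) (use False c1 ab in \<open>auto simp: Xmat_index\<close>)
            then show ?thesis by simp
          qed
        qed
      qed
      have "\<forall>i<n+1. \<forall>j<n+1. (\<Sum>X\<in>S. c X * X $$ (i,j)) = 0"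
      proof (intro allI impI)
        fix i j assume ij: "i < n+1" "j < n+1"
        have "(\<Sum>X\<in>S. c X * X $$ (i,j)) =
           (\<Sum>X\<in>S. \<Sum>b<n+1. \<Sum>a<n+1. (c X * Xmat n (ph X) $$ (a,b)) * (g $$ (i,a) * h $$ (b,j)))"
        proof (rule sum.cong[OF refl])
          fix X assume X: "X \<in> S"
          have e: "X = g * Xmat n (ph X) * h" using struct X S by blast
          have "X $$ (i,j) = (g * Xmat n (ph X) * h) $$ (i,j)" using e by (rule arg_cong)
          also have "\<dots> = (\<Sum>b<n+1. (\<Sum>a<n+1. g $$ (i,a) * Xmat n (ph X) $$ (a,b)) * h $$ (b,j))"
            by (rule triple_entry[OF gc _ h ij]) simp
          finally have "c X * X $$ (i,j) = c X * (\<Sum>b<n+1. (\<Sum>a<n+1. g $$ (i,a) * Xmat n (ph X) $$ (a,b)) * h $$ (b,j))"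
            by simp
          also have "\<dots> = (\<Sum>b<n+1. \<Sum>a<n+1. c X * (g $$ (i,a) * Xmat n (ph X) $$ (a,b) * h $$ (b,j)))"
            unfolding sum_distrib_left sum_distrib_right ..
          also have "\<dots> = (\<Sum>b<n+1. \<Sum>a<n+1. (c X * Xmat n (ph X) $$ (a,b)) * (g $$ (i,a) * h $$ (b,j)))"
            by (intro sum.cong refl) (simp add: mult_ac)
          finally show "c X * X $$ (i,j) = (\<Sum>b<n+1. \<Sum>a<n+1. (c X * Xmat n (ph X) $$ (a,b)) * (g $$ (i,a) * h $$ (b,j)))" .
        qed
        also have "\<dots> = (\<Sum>b<n+1. \<Sum>a<n+1. (\<Sum>X\<in>S. c X * Xmat n (ph X) $$ (a,b)) * (g $$ (i,a) * h $$ (b,j)))"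
          by (simp del: sum.lessThan_Suc add: sum.swap[of _ S] sum_distrib_right)
        also have "\<dots> = 0" by (simp del: sum.lessThan_Suc add: Ysum)
        finally show "(\<Sum>X\<in>S. c X * X $$ (i,j)) = 0" .
      qed
      then show ?thesis by (rule mp[OF spec[OF S(3)[unfolded mat_lin_indep_def], of c]])
    qed
    show ?thesis
    proof (rule count_bound[OF n3 S(1) inj, of z2 z3])
      show "\<And>X k. X \<in> S \<Longrightarrow> k \<notin> {2..n} \<Longrightarrow> ph X k = 0" by (rule phsupp)
      show "\<And>k. k \<notin> {2..n} \<Longrightarrow> z2 k = 0 \<and> z3 k = 0" by (auto simp: z2_def z3_def)
      show "(\<Sum>k\<in>{2..n}. ph X k * z2 k) = 0" if "X \<in> S" for X
      proof -
        have "(\<Sum>k\<in>{2..n}. ph X k * z2 k) = (\<Sum>k\<in>{2..n}. g $$ (2,k) * ph X k)"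
          by (rule sum.cong) (auto simp: z2_def)
        also have "\<dots> = 0" using gr[of X 2] that S by auto
        finally show ?thesis .
      qed
      show "(\<Sum>k\<in>{2..n}. ph X k * z3 k) = 0" if "X \<in> S" for X
      proof -
        have "(\<Sum>k\<in>{2..n}. ph X k * z3 k) = (\<Sum>k\<in>{2..n}. g $$ (3,k) * ph X k)"
          by (rule sum.cong) (auto simp: z3_def)
        also have "\<dots> = 0" using gr[of X 3] that S by auto
        finally show ?thesis .
      qed
      show "(\<Sum>k\<in>{2..n}. z2 k * z2 k) = 1" using G[of 2 2] by (simp add: z2_def)
      show "(\<Sum>k\<in>{2..n}. z3 k * z3 k) = 1" using G[of 3 3] by (simp add: z3_def)
      show "(\<Sum>k\<in>{2..n}. z2 k * z3 k) = 0" using G[of 2 3] by (simp add: z2_def z3_def)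
      show "\<And>c. \<forall>k. (\<Sum>X\<in>S. c X * ph X k) = 0 \<Longrightarrow> \<forall>X\<in>S. c X = 0" by (rule indep)
    qed
  qed
  show ?thesis
    unfolding group_dim_def mat_dim_def L_def[symmetric]
  proof (rule cSup_least)
    show "{card S |S. finite S \<and> S \<subseteq> L \<and> mat_lin_indep n S} \<noteq> {}"
    proof -
      have "0 \<in> {card S |S. finite S \<and> S \<subseteq> L \<and> mat_lin_indep n S}"
        by (rule CollectI, rule exI[of _ "{}"]) (simp add: mat_lin_indep_def)
      then show ?thesis by blast
    qed
  qed (use bound in auto)
qed


end
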